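(* A finite graph has cutwidth at most $2$ if and only if it is (isomorphic to) a subgraph of some chain of cycles.
   Context: All graphs are finite and simple. A graph with $n$ vertices has cutwidth at most $2$ if its vertices can be numbered $1,\ldots,n$ (bijectively) so that for every $i=1,\ldots,n-1$ there are at most two edges $(u,v)$ with $u\le i<v$. A chain of $n$ cycles is a union of $n$ cycles $Z_1,\ldots,Z_n$ together with vertices $a_j,b_j\in Z_j$ ($j=1,\ldots,n$) such that $Z_i\cap Z_j=\emptyset$ whenever $|i-j|>1$, and $Z_{j-1}\cap Z_j=\{b_{j-1}\}=\{a_j\}$ for every $j=2,\ldots,n$. A chain of cycles is a chain of $n$ cycles for some $n\ge 1$. *)

theory Defs
  imports Main
begin

definition simple_graph :: "'a set \<Rightarrow> 'a set set \<Rightarrow> bool" where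
  "simple_graph V E \<longleftrightarrow> finite V \<and> (\<forall>e\<in>E. e \<subseteq> V \<and> card e = 2)"

definition cutwidth_at_most_2 :: "'a set \<Rightarrow> 'a set set \<Rightarrow> bool" where
  "cutwidth_at_most_2 V E \<longleftrightarrow>
     (\<exists>f. bij_betw f V {1..card V} \<and>
        (\<forall>i\<in>{1..<card V}.
           card {e\<in>E. \<exists>u v. e = {u, v} \<and> f u \<le> i \<and> i < f v} \<le> 2))"

definition is_cycle :: "'a set \<Rightarrow> 'a set set \<Rightarrow> bool" where
  "is_cycle V E \<longleftrightarrow>
     (\<exists>vs. 3 \<le> length vs \<and> distinct vs \<and> V = set vs \<and>
        E = {{vs ! i, vs ! ((i + 1) mod length vs)} | i. i < length vs})"

definition chain_of_cycles :: "'a set \<Rightarrow> 'a set set \<Rightarrow> bool" where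
  "chain_of_cycles V E \<longleftrightarrow>
     (\<exists>(n::nat) (ZV :: nat \<Rightarrow> 'a set) (ZE :: nat \<Rightarrow> 'a set set) a b.
        1 \<le> n \<and>
        (\<forall>j\<in>{1..n}. is_cycle (ZV j) (ZE j) \<and> a j \<in> ZV j \<and> b j \<in> ZV j) \<and>
        (\<forall>i\<in>{1..n}. \<forall>j\<in>{1..n}. (i + 1 < j \<or> j + 1 < i) \<longrightarrow> ZV i \<inter> ZV j = {}) \<and>
        (\<forall>j\<in>{2..n}. ZV (j - 1) \<inter> ZV j = {b (j - 1)} \<and> ZV (j - 1) \<inter> ZV j = {a j}) \<and>
        V = (\<Union>j\<in>{1..n}. ZV j) \<and> E = (\<Union>j\<in>{1..n}. ZE j))"

definition iso_to_subgraph :: "'a set \<Rightarrow> 'a set set \<Rightarrow> 'b set \<Rightarrow> 'b set set \<Rightarrow> bool" where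
  "iso_to_subgraph V E W F \<longleftrightarrow>
     (\<exists>f. inj_on f V \<and> f ` V \<subseteq> W \<and> (\<forall>e\<in>E. f ` e \<in> F))"

end

theory Submission
  imports Defs
begin


definition crossing :: "('a \<Rightarrow> nat) \<Rightarrow> 'a set set \<Rightarrow> nat \<Rightarrow> 'a set set" where
  "crossing h E t = {e\<in>E. \<exists>u v. e = {u,v} \<and> h u \<le> t \<and> t < h v}"

definition cw2h :: "('a \<Rightarrow> nat) \<Rightarrow> 'a set \<Rightarrow> 'a set set \<Rightarrow> bool" where
  "cw2h h V E \<longleftrightarrow> inj_on h V \<and> finite E \<and> (\<forall>t. card (crossing h E t) \<le> 2)"

lemma rank_lemma:
  assumes fin: "finite V" and cw: "cw2h h V E" and sub: "\<forall>e\<in>E. e \<subseteq> V"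
  shows "cutwidth_at_most_2 V E"
proof -
  have inj: "inj_on h V" and finE: "finite E" and ct: "\<And>t. card (crossing h E t) \<le> 2"
    using cw by (auto simp: cw2h_def)
  define r where "r v = card {w\<in>V. h w < h v} + 1" for v
  have mono: "r a < r b" if "a \<in> V" "b \<in> V" "h a < h b" for a b
  proof -
    have "{w\<in>V. h w < h a} \<subset> {w\<in>V. h w < h b}" using that by auto
    then have "card {w\<in>V. h w < h a} < card {w\<in>V. h w < h b}"
      by (intro psubset_card_mono) (use fin in auto)
    then show ?thesis by (simp add: r_def)
  qed
  have rev: "h a < h b" if "a \<in> V" "b \<in> V" "r a < r b" for a b
  proof (rule ccontr)
    assume "\<not> h a < h b"
    then have "h b < h a \<or> h b = h a" by auto
    then show False
    proof
      assume "h b < h a" then have "r b < r a" using mono that by auto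
      then show False using that by simp
    next
      assume "h b = h a" then have "a = b" using inj that by (auto dest: inj_onD)
      then show False using that by simp
    qed
  qed
  have injr: "inj_on r V"
  proof (rule inj_onI)
    fix a b assume ab: "a \<in> V" "b \<in> V" "r a = r b"
    show "a = b"
    proof (rule ccontr)
      assume "a \<noteq> b"
      then have "h a \<noteq> h b" using inj ab by (auto dest: inj_onD)
      then have "h a < h b \<or> h b < h a" by auto
      then show False using mono ab by fastforce
    qed
  qed
  have img: "r ` V \<subseteq> {1..card V}"
  proof
    fix x assume "x \<in> r ` V"
    then obtain v where v: "v \<in> V" "x = r v" by auto
    have "{w\<in>V. h w < h v} \<subset> V" using v by auto
    then have "card {w\<in>V. h w < h v} < card V" using fin by (intro psubset_card_mono) auto
    then show "x \<in> {1..card V}" using v by (simp add: r_def)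
  qed
  have imgeq: "r ` V = {1..card V}"
    using img by (intro card_subset_eq) (auto simp: card_image[OF injr])
  have bij: "bij_betw r V {1..card V}" using injr imgeq by (simp add: bij_betw_def)
  show ?thesis unfolding cutwidth_at_most_2_def
  proof (intro exI conjI ballI)
    show "bij_betw r V {1..card V}" by fact
    fix i assume i: "i \<in> {1..<card V}"
    then have "i \<in> r ` V" using imgeq by auto
    then obtain u' where u': "u' \<in> V" "r u' = i" by auto
    have "{e\<in>E. \<exists>u v. e = {u, v} \<and> r u \<le> i \<and> i < r v} \<subseteq> crossing h E (h u')"
    proof
      fix e assume "e \<in> {e\<in>E. \<exists>u v. e = {u, v} \<and> r u \<le> i \<and> i < r v}"
      then obtain u v where e: "e \<in> E" "e = {u,v}" "r u \<le> i" "i < r v" by auto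
      have uv: "u \<in> V" "v \<in> V" using sub e by auto
      have "h u \<le> h u'"
      proof (cases "r u = r u'")
        case True then have "u = u'" using injr uv u' by (auto dest: inj_onD)
        then show ?thesis by simp
      next
        case False then have "r u < r u'" using e u' by simp
        then show ?thesis using rev uv u' by fastforce
      qed
      moreover have "h u' < h v" using rev uv u' e by auto
      ultimately show "e \<in> crossing h E (h u')" using e by (auto simp: crossing_def)
    qed
    then have "card {e\<in>E. \<exists>u v. e = {u, v} \<and> r u \<le> i \<and> i < r v} \<le> card (crossing h E (h u'))"
      by (intro card_mono) (auto simp: crossing_def finE)
    then show "card {e\<in>E. \<exists>u v. e = {u, v} \<and> r u \<le> i \<and> i < r v} \<le> 2" using ct[of "h u'"] by linarith
  qed
qed

lemma compose_lemma:
  assumes cw: "cw2h H W F" and injg: "inj_on g V" and gV: "g ` V \<subseteq> W"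
    and ge: "\<forall>e\<in>E. g ` e \<in> F" and sub: "\<forall>e\<in>E. e \<subseteq> V" and fin: "finite V"
  shows "cw2h (H \<circ> g) V E"
proof -
  have injH: "inj_on H W" and finF: "finite F" and ct: "\<And>t. card (crossing H F t) \<le> 2"
    using cw by (auto simp: cw2h_def)
  have finE: "finite E" using sub fin by (meson Pow_iff finite_Pow_iff finite_subset subsetI)
  have "inj_on (H \<circ> g) V" using injH injg gV by (auto intro: comp_inj_on inj_on_subset)
  moreover have "card (crossing (H \<circ> g) E t) \<le> 2" for t
  proof -
    have "inj_on ((`) g) (crossing (H \<circ> g) E t)"
    proof (rule inj_onI)
      fix a b assume "a \<in> crossing (H \<circ> g) E t" "b \<in> crossing (H \<circ> g) E t" "g ` a = g ` b"
      then show "a = b" using inj_on_image_eq_iff[OF injg] sub by (auto simp: crossing_def)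
    qed
    moreover have "(`) g ` (crossing (H \<circ> g) E t) \<subseteq> crossing H F t"
      using ge by (auto simp: crossing_def)
    ultimately have "card (crossing (H \<circ> g) E t) \<le> card (crossing H F t)"
      by (intro card_inj_on_le) (auto simp: crossing_def finF)
    then show ?thesis using ct[of t] by linarith
  qed
  ultimately show ?thesis using finE by (simp add: cw2h_def)
qed



definition cpos :: "nat \<Rightarrow> nat \<Rightarrow> nat \<Rightarrow> nat" where
  "cpos m k i = (if i < k then i else if i = k then m - 1 else k + m - 1 - i)"

lemma cpos_arith:
  assumes "i < m" "k < m" "0 < k"
    and "j = (if i = m - 1 then 0 else i + 1)"
    and "(cpos m k i \<le> t \<and> t < cpos m k j) \<or> (cpos m k j \<le> t \<and> t < cpos m k i)"
  shows "i = (if t < k then t else k - 1) \<or> i = (if t < k then m - 1 else k + m - 2 - t)"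
  using assms unfolding cpos_def by (auto split: if_splits)

lemma cpos_inj: "k < m \<Longrightarrow> inj_on (cpos m k) {..<m}"
  unfolding cpos_def by (auto intro!: inj_onI split: if_splits)

lemma cpos_le: "i < m \<Longrightarrow> k < m \<Longrightarrow> cpos m k i \<le> m - 1"
  unfolding cpos_def by auto

lemma mod_suc_if: assumes "(i::nat) < m" shows "(i + 1) mod m = (if i = m - 1 then 0 else i + 1)"
proof (cases "i = m - 1")
  case True then have "i + 1 = m" using assms by arith
  then show ?thesis using True by simp
next
  case False then have "i + 1 < m" using assms by simp
  then show ?thesis using False by simp
qed

lemma cycle_list_cw:
  assumes d: "distinct vs" and len: "3 \<le> length vs" and k: "0 < k" "k < length vs"
  shows "\<exists>h. cw2h h (set vs) {{vs ! i, vs ! ((i + 1) mod length vs)} | i. i < length vs}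
           \<and> h (vs ! 0) = 0 \<and> (\<forall>w\<in>set vs. h w \<le> h (vs ! k))"
proof -
  define m where "m = length vs"
  define E where "E = {{vs ! i, vs ! ((i + 1) mod length vs)} | i. i < length vs}"
  have injn: "inj_on ((!) vs) {..<m}" using d unfolding m_def by (simp add: inj_on_nth)
  have imn: "(!) vs ` {..<m} = set vs" unfolding m_def by (auto simp: in_set_conv_nth)
  define idx where "idx = the_inv_into {..<m} ((!) vs)"
  define h where "h v = cpos m k (idx v)" for v
  have idx_nth: "idx (vs ! i) = i" if "i < m" for i
    unfolding idx_def using the_inv_into_f_f[OF injn] that by auto
  have h_nth: "h (vs ! i) = cpos m k i" if "i < m" for i
    using idx_nth that by (simp add: h_def)
  have idx_in: "idx v < m" "vs ! idx v = v" if "v \<in> set vs" for v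
    using the_inv_into_into[OF injn, of v "{..<m}"] f_the_inv_into_f[OF injn, of v] that imn
    unfolding idx_def by auto
  have injh: "inj_on h (set vs)"
  proof (rule inj_onI)
    fix a b assume ab: "a \<in> set vs" "b \<in> set vs" "h a = h b"
    then have "idx a = idx b" using cpos_inj[of k m] k idx_in unfolding h_def m_def
      by (auto dest: inj_onD)
    then show "a = b" using idx_in ab by metis
  qed
  have finE: "finite E" unfolding E_def by simp
  have ct: "card (crossing h E t) \<le> 2" for t
  proof -
    define i1 where "i1 = (if t < k then t else k - 1)"
    define i2 where "i2 = (if t < k then m - 1 else k + m - 2 - t)"
    have "crossing h E t \<subseteq> {{vs ! i1, vs ! ((i1 + 1) mod m)}, {vs ! i2, vs ! ((i2 + 1) mod m)}}"
    proof
      fix e assume "e \<in> crossing h E t"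
      then obtain u v i where i: "i < m" "e = {vs ! i, vs ! ((i + 1) mod m)}" "e = {u,v}" "h u \<le> t" "t < h v"
        unfolding crossing_def E_def m_def by auto
      define j where "j = (if i = m - 1 then 0 else i + 1)"
      have jm: "(i + 1) mod m = j" "j < m" using mod_suc_if[OF i(1)] i(1) by (auto simp: j_def)
      have "(u = vs ! i \<and> v = vs ! j) \<or> (u = vs ! j \<and> v = vs ! i)"
        using i jm by (auto simp: doubleton_eq_iff)
      then have "(cpos m k i \<le> t \<and> t < cpos m k j) \<or> (cpos m k j \<le> t \<and> t < cpos m k i)"
        using i h_nth jm by auto
      then have "i = i1 \<or> i = i2" unfolding i1_def i2_def
        using cpos_arith[OF i(1) _ k(1) j_def] k m_def by auto
      then show "e \<in> {{vs ! i1, vs ! ((i1 + 1) mod m)}, {vs ! i2, vs ! ((i2 + 1) mod m)}}"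
        using i by auto
    qed
    then have "card (crossing h E t) \<le> card {{vs ! i1, vs ! ((i1 + 1) mod m)}, {vs ! i2, vs ! ((i2 + 1) mod m)}}"
      by (intro card_mono) auto
    also have "\<dots> \<le> 2" by (rule card_insert_le_m1) auto
    finally show ?thesis .
  qed
  have "h (vs ! 0) = 0" proof -
    have "0 < m" using k unfolding m_def by arith
    then have "h (vs ! 0) = cpos m k 0" using h_nth[of 0] by simp
    then show ?thesis using k by (simp add: cpos_def)
  qed
  moreover have "\<forall>w\<in>set vs. h w \<le> h (vs ! k)"
  proof
    fix w assume "w \<in> set vs"
    then have "h w = cpos m k (idx w)" "idx w < m" using idx_in h_def by auto
    then have "h w \<le> m - 1" using cpos_le k m_def by auto
    moreover have "h (vs ! k) = m - 1" using h_nth[of k] k m_def cpos_def by auto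
    ultimately show "h w \<le> h (vs ! k)" by simp
  qed
  ultimately show ?thesis using injh finE ct unfolding cw2h_def E_def by blast
qed



lemma rot_edge:
  assumes "i < length vs"
  shows "{rotate r vs ! i, rotate r vs ! ((i + 1) mod length vs)}
       = {vs ! ((r + i) mod length vs), vs ! (((r + i) mod length vs + 1) mod length vs)}"
proof -
  have m: "0 < length vs" "vs \<noteq> []" using assms by (cases vs; auto)+
  have "(r + (i + 1) mod length vs) mod length vs = ((r + i) mod length vs + 1) mod length vs"
    by (simp add: mod_add_right_eq mod_add_left_eq add.assoc mod_Suc_eq)
  then show ?thesis using assms m by (simp add: nth_rotate)
qed

lemma rot_surj:
  assumes "j < (m::nat)" "r < m"
  shows "\<exists>i<m. (r + i) mod m = j"
proof -
  define i where "i = (j + m - r) mod m"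
  have "(r + i) mod m = (r + (j + m - r)) mod m" unfolding i_def by (simp add: mod_add_right_eq)
  also have "r + (j + m - r) = j + m" using assms by simp
  finally have "(r + i) mod m = j" using assms by simp
  moreover have "i < m" using assms unfolding i_def by simp
  ultimately show ?thesis by blast
qed

lemma cycle_cw:
  assumes cyc: "is_cycle V E" and x: "x \<in> V" and y: "y \<in> V" and xy: "x \<noteq> y"
  shows "\<exists>h. cw2h h V E \<and> (\<forall>w\<in>V. h x \<le> h w) \<and> (\<forall>w\<in>V. h w \<le> h y)"
proof -
  obtain vs where vs: "3 \<le> length vs" "distinct vs" "V = set vs"
    "E = {{vs ! i, vs ! ((i + 1) mod length vs)} | i. i < length vs}"
    using cyc unfolding is_cycle_def by blast
  define m where "m = length vs"
  obtain r where r: "r < m" "vs ! r = x" using x vs unfolding m_def by (auto simp: in_set_conv_nth)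
  define ws where "ws = rotate r vs"
  have lws: "length ws = m" unfolding ws_def m_def by simp
  have dws: "distinct ws" unfolding ws_def using vs by simp
  have sws: "set ws = V" unfolding ws_def using vs by simp
  have ws0: "ws ! 0 = x"
  proof -
    have "0 < length vs" using r unfolding m_def by linarith
    then have "ws ! 0 = vs ! ((r + 0) mod length vs)" unfolding ws_def by (rule nth_rotate)
    then show ?thesis using r m_def by simp
  qed
  have Eeq: "E = {{ws ! i, ws ! ((i + 1) mod length ws)} | i. i < length ws}"
  proof
    show "E \<subseteq> {{ws ! i, ws ! ((i + 1) mod length ws)} | i. i < length ws}"
    proof
      fix e assume "e \<in> E"
      then obtain j where j: "j < m" "e = {vs ! j, vs ! ((j + 1) mod m)}" using vs m_def by auto
      obtain i where i: "i < m" "(r + i) mod m = j" using rot_surj[OF j(1) r(1)] by blast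
      have "e = {ws ! i, ws ! ((i + 1) mod length ws)}"
        using rot_edge[of i vs r] i j lws unfolding ws_def m_def by simp
      then show "e \<in> {{ws ! i, ws ! ((i + 1) mod length ws)} | i. i < length ws}"
        using i lws by auto
    qed
  next
    show "{{ws ! i, ws ! ((i + 1) mod length ws)} | i. i < length ws} \<subseteq> E"
    proof
      fix e assume "e \<in> {{ws ! i, ws ! ((i + 1) mod length ws)} | i. i < length ws}"
      then obtain i where i: "i < m" "e = {ws ! i, ws ! ((i + 1) mod length ws)}" using lws by auto
      have "e = {vs ! ((r + i) mod m), vs ! (((r + i) mod m + 1) mod m)}"
        using rot_edge[of i vs r] i lws unfolding ws_def m_def by simp
      moreover have "(r + i) mod m < m" using i by simp
      ultimately show "e \<in> E" using vs m_def by auto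
    qed
  qed
  obtain k where k: "k < m" "ws ! k = y" using y sws lws by (auto simp: in_set_conv_nth)
  have k0: "0 < k" using k ws0 xy by (cases k) auto
  obtain h where h: "cw2h h (set ws) {{ws ! i, ws ! ((i + 1) mod length ws)} | i. i < length ws}"
    "h (ws ! 0) = 0" "\<forall>w\<in>set ws. h w \<le> h (ws ! k)"
    using cycle_list_cw[OF dws _ k0] vs lws k by (auto simp: m_def)
  show ?thesis using h sws Eeq ws0 k by (intro exI[of _ h]) auto
qed



lemma glue:
  assumes h1: "cw2h h1 V1 E1" and h2: "cw2h h2 V2 E2"
    and s1: "\<forall>e\<in>E1. e \<subseteq> V1" and s2: "\<forall>e\<in>E2. e \<subseteq> V2"
    and int: "V1 \<inter> V2 = {x}" and x1max: "\<forall>w\<in>V1. h1 w \<le> h1 x" and x2min: "\<forall>w\<in>V2. h2 x \<le> h2 w"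
    and y: "y \<in> V2" "\<forall>w\<in>V2. h2 w \<le> h2 y"
  shows "\<exists>h. cw2h h (V1 \<union> V2) (E1 \<union> E2) \<and> (\<forall>w\<in>V1 \<union> V2. h w \<le> h y)"
proof -
  have inj1: "inj_on h1 V1" and fin1: "finite E1" and ct1: "\<And>t. card (crossing h1 E1 t) \<le> 2"
    using h1 by (auto simp: cw2h_def)
  have inj2: "inj_on h2 V2" and fin2: "finite E2" and ct2: "\<And>t. card (crossing h2 E2 t) \<le> 2"
    using h2 by (auto simp: cw2h_def)
  have xV: "x \<in> V1" "x \<in> V2" using int by auto
  define h where "h w = (if w \<in> V1 then h1 w else h1 x + (h2 w - h2 x))" for w
  have hV1: "h w = h1 w" if "w \<in> V1" for w using that h_def by simp
  have hV2: "h w = h1 x + (h2 w - h2 x)" if "w \<in> V2" for w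
  proof (cases "w \<in> V1")
    case True then have "w = x" using int that by auto
    then show ?thesis by (simp add: h_def xV)
  next
    case False then show ?thesis by (simp add: h_def)
  qed
  have gt: "h1 x < h w" if "w \<in> V2" "w \<notin> V1" for w
  proof -
    have "w \<noteq> x" using that xV by auto
    then have "h2 w \<noteq> h2 x" using inj2 that xV by (auto dest: inj_onD)
    then have "h2 x < h2 w" using x2min that by (metis le_neq_implies_less)
    then show ?thesis using hV2 that by simp
  qed
  have ge: "h1 x \<le> h w" if "w \<in> V2" for w using hV2 that by simp
  have inj: "inj_on h (V1 \<union> V2)"
  proof (rule inj_onI)
    fix a b assume ab: "a \<in> V1 \<union> V2" "b \<in> V1 \<union> V2" "h a = h b"
    show "a = b"
    proof (cases "a \<in> V1"; cases "b \<in> V1")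
      assume "a \<in> V1" "b \<in> V1" then show ?thesis using ab inj1 hV1 by (auto dest: inj_onD)
    next
      assume a: "a \<in> V1" "b \<notin> V1"
      then have "h a \<le> h1 x" using hV1 x1max by auto
      moreover have "b \<in> V2" using ab a by auto
      then have "h1 x < h b" using gt[of b] a by blast
      ultimately show ?thesis using ab by simp
    next
      assume a: "a \<notin> V1" "b \<in> V1"
      then have "h b \<le> h1 x" using hV1 x1max by auto
      moreover have "a \<in> V2" using ab a by auto
      then have "h1 x < h a" using gt[of a] a by blast
      ultimately show ?thesis using ab by simp
    next
      assume a: "a \<notin> V1" "b \<notin> V1"
      then have "a \<in> V2" "b \<in> V2" using ab by auto
      then have "h2 a = h2 b" using ab hV2 x2min by (metis add_left_cancel le_add_diff_inverse)
      then show ?thesis using inj2 \<open>a \<in> V2\<close> \<open>b \<in> V2\<close> by (auto dest: inj_onD)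
    qed
  qed
  have ct: "card (crossing h (E1 \<union> E2) t) \<le> 2" for t
  proof (cases "t < h1 x")
    case True
    have "crossing h (E1 \<union> E2) t \<subseteq> crossing h1 E1 t"
    proof
      fix e assume "e \<in> crossing h (E1 \<union> E2) t"
      then obtain u v where e: "e \<in> E1 \<union> E2" "e = {u,v}" "h u \<le> t" "t < h v"
        by (auto simp: crossing_def)
      show "e \<in> crossing h1 E1 t"
      proof (cases "e \<in> E1")
        case True then have "u \<in> V1" "v \<in> V1" using s1 e by auto
        then show ?thesis using e True hV1 by (auto simp: crossing_def)
      next
        case False then have "u \<in> V2" using s2 e by auto
        then show ?thesis using ge \<open>t < h1 x\<close> e by fastforce
      qed
    qed
    then have "card (crossing h (E1 \<union> E2) t) \<le> card (crossing h1 E1 t)"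
      by (intro card_mono) (auto simp: crossing_def fin1)
    then show ?thesis using ct1[of t] by linarith
  next
    case False
    define t' where "t' = t - h1 x + h2 x"
    have "crossing h (E1 \<union> E2) t \<subseteq> crossing h2 E2 t'"
    proof
      fix e assume "e \<in> crossing h (E1 \<union> E2) t"
      then obtain u v where e: "e \<in> E1 \<union> E2" "e = {u,v}" "h u \<le> t" "t < h v"
        by (auto simp: crossing_def)
      show "e \<in> crossing h2 E2 t'"
      proof (cases "e \<in> E2")
        case True then have uv: "u \<in> V2" "v \<in> V2" using s2 e by auto
        have "h2 u \<le> t'" "t' < h2 v" using e hV2[OF uv(1)] hV2[OF uv(2)] x2min uv False
          unfolding t'_def by auto
        then show ?thesis using e True by (auto simp: crossing_def)
      next
        case False then have "v \<in> V1" using s1 e by auto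
        then show ?thesis using hV1 x1max \<open>\<not> t < h1 x\<close> e by fastforce
      qed
    qed
    then have "card (crossing h (E1 \<union> E2) t) \<le> card (crossing h2 E2 t')"
      by (intro card_mono) (auto simp: crossing_def fin2)
    then show ?thesis using ct2[of t'] by linarith
  qed
  have ymax: "\<forall>w\<in>V1 \<union> V2. h w \<le> h y"
  proof
    fix w assume w: "w \<in> V1 \<union> V2"
    have hy: "h y = h1 x + (h2 y - h2 x)" using hV2 y by simp
    show "h w \<le> h y"
    proof (cases "w \<in> V1")
      case True then show ?thesis using hV1 x1max hy by fastforce
    next
      case False then have "w \<in> V2" using w by simp
      then show ?thesis using hV2 hy y x2min by fastforce
    qed
  qed
  show ?thesis using inj ct ymax fin1 fin2 by (intro exI[of _ h]) (auto simp: cw2h_def)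
qed

lemma cycle_facts:
  assumes "is_cycle V E"
  shows "\<forall>e\<in>E. e \<subseteq> V" "finite V" "\<exists>y\<in>V. y \<noteq> x"
proof -
  obtain vs where vs: "3 \<le> length vs" "distinct vs" "V = set vs"
    "E = {{vs ! i, vs ! ((i + 1) mod length vs)} | i. i < length vs}"
    using assms unfolding is_cycle_def by blast
  have "vs ! ((i + 1) mod length vs) \<in> set vs" if "i < length vs" for i
  proof -
    have "0 < length vs" using that by linarith
    then show ?thesis by (intro nth_mem) simp
  qed
  then show "\<forall>e\<in>E. e \<subseteq> V" using vs by auto
  show "finite V" using vs by auto
  have "vs ! 0 \<noteq> vs ! 1" using vs nth_eq_iff_index_eq[of vs 0 1] by linarith
  moreover have "0 < length vs" "1 < length vs" using vs by linarith+
  then have "vs ! 0 \<in> V" "vs ! 1 \<in> V" using vs nth_mem by blast+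
  ultimately show "\<exists>y\<in>V. y \<noteq> x" by metis
qed



lemma chain_cw:
  assumes "chain_of_cycles W F"
  shows "\<exists>h. cw2h h W F"
proof -
  obtain n :: nat and ZV :: "nat \<Rightarrow> 'a set" and ZE a b where
    n1: "1 \<le> n" and
    c2: "\<forall>j\<in>{1..n}. is_cycle (ZV j) (ZE j) \<and> a j \<in> ZV j \<and> b j \<in> ZV j" and
    c3: "\<forall>i\<in>{1..n}. \<forall>j\<in>{1..n}. (i + 1 < j \<or> j + 1 < i) \<longrightarrow> ZV i \<inter> ZV j = {}" and
    c4: "\<forall>j\<in>{2..n}. ZV (j - 1) \<inter> ZV j = {b (j - 1)} \<and> ZV (j - 1) \<inter> ZV j = {a j}" and
    WF: "W = (\<Union>j\<in>{1..n}. ZV j)" "F = (\<Union>j\<in>{1..n}. ZE j)"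
    using assms unfolding chain_of_cycles_def by blast
  define U where "U k = (\<Union>j\<in>{1..k}. ZV j)" for k
  define D where "D k = (\<Union>j\<in>{1..k}. ZE j)" for k
  have abne: "a k \<noteq> b k" if "2 \<le> k" "k < n" for k
  proof
    assume eq: "a k = b k"
    have "a k \<in> ZV (k - 1)" using c4 that by (metis Int_iff atLeastAtMost_iff insertI1 less_imp_le)
    moreover have "ZV k \<inter> ZV (Suc k) = {b k}" using c4[rule_format, of "Suc k"] that by simp
    then have "b k \<in> ZV (Suc k)" by auto
    moreover have "ZV (k - 1) \<inter> ZV (Suc k) = {}"
    proof -
      have "k - 1 \<in> {1..n}" "Suc k \<in> {1..n}" "k - 1 + 1 < Suc k" using that by auto
      then show ?thesis using c3 by blast
    qed
    ultimately show False using eq by auto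
  qed
  have main: "\<forall>y\<in>ZV k. (k = 1 \<or> y \<noteq> a k) \<longrightarrow> (\<exists>h. cw2h h (U k) (D k) \<and> (\<forall>w\<in>U k. h w \<le> h y))"
    if "1 \<le> k" "k \<le> n" for k
    using that
  proof (induction k)
    case 0 then show ?case by simp
  next
    case (Suc k)
    show ?case
    proof (cases "k = 0")
      case True
      have cyc: "is_cycle (ZV 1) (ZE 1)" using c2 n1 by auto
      show ?thesis
      proof (intro ballI impI)
        fix y assume y: "y \<in> ZV (Suc k)"
        obtain x where x: "x \<in> ZV 1" "x \<noteq> y" using cycle_facts(3)[OF cyc, of y] by metis
        obtain h where h: "cw2h h (ZV 1) (ZE 1)" "\<forall>w\<in>ZV 1. h w \<le> h y"
          using cycle_cw[OF cyc x(1), of y] x y True by auto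
        have "U (Suc k) = ZV 1" "D (Suc k) = ZE 1" using True by (auto simp: U_def D_def)
        then show "\<exists>h. cw2h h (U (Suc k)) (D (Suc k)) \<and> (\<forall>w\<in>U (Suc k). h w \<le> h y)"
          using h by auto
      qed
    next
      case False
      then have k1: "1 \<le> k" and kn: "k < n" using Suc by auto
      have IH: "\<forall>y\<in>ZV k. (k = 1 \<or> y \<noteq> a k) \<longrightarrow> (\<exists>h. cw2h h (U k) (D k) \<and> (\<forall>w\<in>U k. h w \<le> h y))"
        using Suc k1 kn by auto
      have bk: "b k \<in> ZV k" using c2 k1 kn by auto
      have "k = 1 \<or> b k \<noteq> a k" using abne[of k] kn k1 by (cases "k = 1") auto
      then obtain h1 where h1: "cw2h h1 (U k) (D k)" "\<forall>w\<in>U k. h1 w \<le> h1 (b k)"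
        using IH bk by blast
      have cyc: "is_cycle (ZV (Suc k)) (ZE (Suc k))" using c2 Suc by auto
      have c4k: "ZV k \<inter> ZV (Suc k) = {b k}" "ZV k \<inter> ZV (Suc k) = {a (Suc k)}"
        using c4[rule_format, of "Suc k"] k1 kn by auto
      then have abk: "a (Suc k) = b k" by auto
      have bk2: "b k \<in> ZV (Suc k)" using c4k by auto
      have UE: "U (Suc k) = U k \<union> ZV (Suc k)" "D (Suc k) = D k \<union> ZE (Suc k)"
        unfolding U_def D_def by (auto simp: atLeastAtMostSuc_conv)
      have s1: "\<forall>e\<in>D k. e \<subseteq> U k"
      proof
        fix e assume "e \<in> D k"
        then obtain j where j: "j \<in> {1..k}" "e \<in> ZE j" unfolding D_def by auto
        then have "is_cycle (ZV j) (ZE j)" using c2 kn by auto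
        then have "e \<subseteq> ZV j" using cycle_facts(1) j by blast
        then show "e \<subseteq> U k" using j unfolding U_def by auto
      qed
      have s2: "\<forall>e\<in>ZE (Suc k). e \<subseteq> ZV (Suc k)" using cycle_facts(1)[OF cyc] .
      have int: "U k \<inter> ZV (Suc k) = {b k}"
      proof
        show "U k \<inter> ZV (Suc k) \<subseteq> {b k}"
        proof
          fix w assume w: "w \<in> U k \<inter> ZV (Suc k)"
          then obtain j where j: "j \<in> {1..k}" "w \<in> ZV j" unfolding U_def by auto
          show "w \<in> {b k}"
          proof (cases "j = k")
            case True then show ?thesis using w j c4k by auto
          next
            case False
            then have "ZV j \<inter> ZV (Suc k) = {}" using c3 j kn by auto
            then show ?thesis using w j by auto
          qed
        qed
        show "{b k} \<subseteq> U k \<inter> ZV (Suc k)" using bk bk2 k1 unfolding U_def by auto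
      qed
      show ?thesis
      proof (intro ballI impI)
        fix y assume y: "y \<in> ZV (Suc k)" "Suc k = 1 \<or> y \<noteq> a (Suc k)"
        then have yne: "b k \<noteq> y" using abk False by auto
        obtain h2 where h2: "cw2h h2 (ZV (Suc k)) (ZE (Suc k))" "\<forall>w\<in>ZV (Suc k). h2 (b k) \<le> h2 w"
          "\<forall>w\<in>ZV (Suc k). h2 w \<le> h2 y"
          using cycle_cw[OF cyc bk2 y(1) yne] by blast
        show "\<exists>h. cw2h h (U (Suc k)) (D (Suc k)) \<and> (\<forall>w\<in>U (Suc k). h w \<le> h y)"
          using glue[OF h1(1) h2(1) s1 s2 int h1(2) h2(2) y(1) h2(3)] UE by simp
      qed
    qed
  qed
  have cycn: "is_cycle (ZV n) (ZE n)" using c2 n1 by auto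
  obtain y where y: "y \<in> ZV n" "y \<noteq> a n" using cycle_facts(3)[OF cycn, of "a n"] by metis
  obtain h where "cw2h h (U n) (D n)" using main[OF n1 order.refl] y by blast
  then show ?thesis using WF U_def D_def by auto
qed



definition conflict :: "('a \<Rightarrow> nat) \<Rightarrow> 'a set set \<Rightarrow> 'a set \<Rightarrow> 'a set \<Rightarrow> bool" where
  "conflict h E e1 e2 \<longleftrightarrow> e1 \<noteq> e2 \<and> (\<exists>t. e1 \<in> crossing h E t \<and> e2 \<in> crossing h E t)"

lemma Min_pair: "(a::nat) \<le> b \<Longrightarrow> Min {a, b} = a"
  by (simp add: min_def)

lemma lanes:
  assumes finE: "finite E" and ed: "\<forall>e\<in>E. \<exists>u v. e = {u,v} \<and> h u < h v"
    and ct: "\<forall>t. card (crossing h E t) \<le> 2"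
  shows "\<exists>lane :: 'a set \<Rightarrow> bool. \<forall>e1\<in>E. \<forall>e2\<in>E. conflict h E e1 e2 \<longrightarrow> lane e1 \<noteq> lane e2"
proof -
  define lo where "lo e = Min (h ` e)" for e :: "'a set"
  have lo_eq: "lo e = h u" if "e = {u,v}" "h u \<le> h v" for e u v
    using that Min_pair[of "h u" "h v"] by (simp add: lo_def)
  have cr_lo: "x \<in> crossing h E (lo x)" if xE: "x \<in> E" for x
  proof -
    obtain u v where uv: "x = {u,v}" "h u < h v" using ed xE by blast
    then have "lo x = h u" using lo_eq[of x u v] by simp
    then have "x = {u,v} \<and> h u \<le> lo x \<and> lo x < h v" using uv by simp
    then show ?thesis using xE unfolding crossing_def by (intro CollectI conjI exI) auto
  qed
  have cr_lo_le: "lo x \<le> t" if xc: "x \<in> crossing h E t" for x t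
  proof -
    obtain u v where uv: "x = {u,v}" "h u \<le> t" "t < h v" using xc unfolding crossing_def by blast
    then have "lo x = h u" using lo_eq[of x u v] by simp
    then show ?thesis using uv by simp
  qed
  have cr_move: "y \<in> crossing h E (lo x)" if yx: "y \<in> crossing h E t" "x \<in> crossing h E t"
    "lo y \<le> lo x" for x y t
  proof -
    obtain p q where pq: "y = {p,q}" "h p \<le> t" "t < h q" "y \<in> E" using yx(1) unfolding crossing_def by blast
    have "lo y = h p" using lo_eq[OF pq(1)] pq by simp
    moreover have "lo x \<le> t" using cr_lo_le yx by blast
    ultimately have "h p \<le> lo x" "lo x < h q" using pq yx by simp_all
    then have "y = {p,q} \<and> h p \<le> lo x \<and> lo x < h q" using pq by simp
    then show ?thesis using pq unfolding crossing_def by (intro CollectI conjI exI) auto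
  qed
  have "S \<subseteq> E \<longrightarrow> (\<exists>lane :: 'a set \<Rightarrow> bool. \<forall>e1\<in>S. \<forall>e2\<in>S. conflict h E e1 e2 \<longrightarrow> lane e1 \<noteq> lane e2)" for S
  proof -
    have "finite S \<Longrightarrow> ?thesis"
    proof (induction S rule: finite_ranking_induct[where f = lo])
      case empty then show ?case by simp
    next
      case (insert x S)
      show ?case
      proof
        assume sub: "insert x S \<subseteq> E"
        then obtain lane :: "'a set \<Rightarrow> bool" where lane: "\<forall>e1\<in>S. \<forall>e2\<in>S. conflict h E e1 e2 \<longrightarrow> lane e1 \<noteq> lane e2"
          using insert by auto
        show "\<exists>lane :: 'a set \<Rightarrow> bool. \<forall>e1\<in>insert x S. \<forall>e2\<in>insert x S. conflict h E e1 e2 \<longrightarrow> lane e1 \<noteq> lane e2"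
        proof (cases "x \<in> S")
          case True then show ?thesis using lane by (auto simp: insert_absorb)
        next
          case False
          define C where "C = {y\<in>S. conflict h E x y}"
          have xE: "x \<in> E" using sub by auto
          have Csub: "C \<subseteq> crossing h E (lo x) - {x}"
          proof
            fix y assume "y \<in> C"
            then have y: "y \<in> S" "conflict h E x y" by (auto simp: C_def)
            then obtain t where "x \<in> crossing h E t" "y \<in> crossing h E t" "x \<noteq> y"
              by (auto simp: conflict_def)
            then show "y \<in> crossing h E (lo x) - {x}" using cr_move insert(2) y by blast
          qed
          have fincr: "finite (crossing h E (lo x))" using finE by (simp add: crossing_def)
          have "card (crossing h E (lo x) - {x}) = card (crossing h E (lo x)) - 1"
            using cr_lo[OF xE] fincr by simp
          then have "card (crossing h E (lo x) - {x}) \<le> 1" using ct by (metis diff_le_mono one_add_one add_diff_cancel_right')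
          then have "card C \<le> 1" using card_mono[OF _ Csub] fincr by (meson finite_Diff order_trans)
          moreover have "finite C" using Csub fincr by (meson finite_Diff finite_subset)
          ultimately have C1: "\<forall>a\<in>C. \<forall>b\<in>C. a = b" using card_le_Suc0_iff_eq by auto
          define lane' where "lane' = (if C = {} then lane else lane(x := \<not> lane (SOME y. y \<in> C)))"
          have "\<forall>e1\<in>insert x S. \<forall>e2\<in>insert x S. conflict h E e1 e2 \<longrightarrow> lane' e1 \<noteq> lane' e2"
          proof (intro ballI impI)
            fix e1 e2 assume e: "e1 \<in> insert x S" "e2 \<in> insert x S" "conflict h E e1 e2"
            have sym: "conflict h E e2 e1" using e(3) by (auto simp: conflict_def)
            have ne: "e1 \<noteq> e2" using e(3) by (auto simp: conflict_def)
            show "lane' e1 \<noteq> lane' e2"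
            proof (cases "e1 = x")
              case True
              then have "e2 \<in> C" using e ne C_def by auto
              then have "(SOME y. y \<in> C) = e2" using C1 by (metis someI)
              then show ?thesis using True \<open>e2 \<in> C\<close> ne lane'_def by auto
            next
              case e1x: False
              show ?thesis
              proof (cases "e2 = x")
                case True
                then have "e1 \<in> C" using e e1x sym C_def by auto
                then have "(SOME y. y \<in> C) = e1" using C1 by (metis someI)
                then show ?thesis using True \<open>e1 \<in> C\<close> ne lane'_def by auto
              next
                case False
                then have "e1 \<in> S" "e2 \<in> S" using e e1x by auto
                then have "lane e1 \<noteq> lane e2" using lane e by blast
                then show ?thesis using e1x False lane'_def by auto
              qed
            qed
          qed
          then show ?thesis by blast
        qed
      qed
    qed
    then show ?thesis using finE finite_subset by blast
  qed
  then show ?thesis by blast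
qed



definition ce :: "'a list \<Rightarrow> 'a set set" where
  "ce L = {{L ! i, L ! ((i + 1) mod length L)} | i. i < length L}"

definition pe :: "'a list \<Rightarrow> 'a set set" where
  "pe L = {{L ! i, L ! (i + 1)} | i. i + 1 < length L}"

lemma ce_step: "i + 1 < length L \<Longrightarrow> {L ! i, L ! (i + 1)} \<in> ce L"
  unfolding ce_def by (rule CollectI, rule exI[of _ i]) auto

lemma ce_wrap:
  assumes "L \<noteq> []" shows "{last L, hd L} \<in> ce L"
proof -
  have l: "0 < length L" using assms by simp
  have "(length L - 1 + 1) mod length L = 0" using l by simp
  moreover have "L ! (length L - 1) = last L" using assms by (simp add: last_conv_nth)
  moreover have "L ! 0 = hd L" using assms by (simp add: hd_conv_nth)
  ultimately show ?thesis unfolding ce_def using l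
    by (intro CollectI exI[of _ "length L - 1"]) auto
qed

lemma pe_sub_ce_left: "pe P \<subseteq> ce (P @ Q)"
proof
  fix e assume "e \<in> pe P"
  then obtain i where i: "i + 1 < length P" "e = {P ! i, P ! (i + 1)}" unfolding pe_def by auto
  then have "e = {(P @ Q) ! i, (P @ Q) ! (i + 1)}" by (simp add: nth_append)
  moreover have "i + 1 < length (P @ Q)" using i by simp
  ultimately show "e \<in> ce (P @ Q)" using ce_step by metis
qed

lemma pe_sub_ce_right: "pe Q \<subseteq> ce (P @ Q)"
proof
  fix e assume "e \<in> pe Q"
  then obtain i where i: "i + 1 < length Q" "e = {Q ! i, Q ! (i + 1)}" unfolding pe_def by auto
  then have "e = {(P @ Q) ! (length P + i), (P @ Q) ! (length P + i + 1)}" by (simp add: nth_append)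
  moreover have "length P + i + 1 < length (P @ Q)" using i by simp
  ultimately show "e \<in> ce (P @ Q)" using ce_step by metis
qed

lemma mid_in_ce:
  assumes "P \<noteq> []" "Q \<noteq> []" shows "{last P, hd Q} \<in> ce (P @ Q)"
proof -
  have "(P @ Q) ! (length P - 1) = last P" using assms by (simp add: nth_append last_conv_nth)
  moreover have "(P @ Q) ! (length P - 1 + 1) = hd Q" using assms by (simp add: nth_append hd_conv_nth)
  moreover have "length P - 1 + 1 < length (P @ Q)" using assms by (cases P; cases Q) auto
  ultimately show ?thesis using ce_step by metis
qed

lemma end_in_ce:
  assumes "P \<noteq> []" "Q \<noteq> []" shows "{last Q, hd P} \<in> ce (P @ Q)"
  using ce_wrap[of "P @ Q"] assms by simp

lemma pe_snoc: assumes "xs \<noteq> []" shows "pe (xs @ [y]) \<subseteq> pe xs \<union> {{last xs, y}}"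
proof
  fix e assume "e \<in> pe (xs @ [y])"
  then obtain i where i: "i + 1 < length xs + 1" "e = {(xs @ [y]) ! i, (xs @ [y]) ! (i + 1)}"
    unfolding pe_def by auto
  show "e \<in> pe xs \<union> {{last xs, y}}"
  proof (cases "i + 1 < length xs")
    case True then have "e = {xs ! i, xs ! (i + 1)}" using i by (simp add: nth_append)
    then show ?thesis using True unfolding pe_def by auto
  next
    case False then have "i = length xs - 1" using i by simp
    then have "e = {last xs, y}" using i assms by (simp add: nth_append last_conv_nth)
    then show ?thesis by simp
  qed
qed

lemma pe_left_ce: assumes "P \<noteq> []" "Q \<noteq> []" shows "pe (P @ [hd Q]) \<subseteq> ce (P @ Q)"
  using pe_snoc[OF assms(1), of "hd Q"] pe_sub_ce_left[of P Q] mid_in_ce[OF assms] by blast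

lemma pe_right_ce: assumes "P \<noteq> []" "Q \<noteq> []" shows "pe (Q @ [hd P]) \<subseteq> ce (P @ Q)"
  using pe_snoc[OF assms(2), of "hd P"] pe_sub_ce_right[of Q P] end_in_ce[OF assms] by blast

lemma pe_rev: "pe (rev xs) = pe xs"
proof -
  have 1: "pe (rev xs) \<subseteq> pe xs" for xs :: "'a list"
  proof
    fix e assume "e \<in> pe (rev xs)"
    then obtain i where i: "i + 1 < length xs" "e = {rev xs ! i, rev xs ! (i + 1)}" unfolding pe_def by auto
    define j where "j = length xs - 2 - i"
    have "rev xs ! i = xs ! (j + 1)" "rev xs ! (i + 1) = xs ! j" using i unfolding j_def
      by (auto simp: rev_nth intro!: arg_cong[where f = "(!) xs"])
    then have "e = {xs ! j, xs ! (j + 1)}" using i by auto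
    moreover have "j + 1 < length xs" using i unfolding j_def by simp
    ultimately show "e \<in> pe xs" unfolding pe_def by auto
  qed
  show ?thesis using 1[of xs] 1[of "rev xs"] by auto
qed

lemma consec_pe:
  assumes s: "sorted_wrt (<) (xs :: nat list)" and u: "u \<in> set xs" and v: "v \<in> set xs" and uv: "u < v"
    and none: "\<forall>w\<in>set xs. \<not> (u < w \<and> w < v)"
  shows "{u, v} \<in> pe xs"
proof -
  obtain i j where ij: "i < length xs" "xs ! i = u" "j < length xs" "xs ! j = v"
    using u v by (auto simp: in_set_conv_nth)
  have lt: "\<And>a b. a < b \<Longrightarrow> b < length xs \<Longrightarrow> xs ! a < xs ! b" using s by (simp add: sorted_wrt_iff_nth_less)
  have "i < j"
  proof (rule ccontr)
    assume "\<not> i < j"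
    then have "j \<le> i" by simp
    then have "xs ! j \<le> xs ! i" using lt ij by (cases "j = i") (auto simp: less_imp_le)
    then show False using ij uv by simp
  qed
  have "j = i + 1"
  proof (rule ccontr)
    assume "j \<noteq> i + 1"
    then have "i + 1 < j" using \<open>i < j\<close> by simp
    then have "u < xs ! (i + 1)" "xs ! (i + 1) < v" using lt ij by auto
    moreover have "xs ! (i + 1) \<in> set xs" using \<open>i + 1 < j\<close> ij by simp
    ultimately show False using none by blast
  qed
  then show ?thesis using ij unfolding pe_def by auto
qed



lemma sorted_nth_less:
  assumes "sorted_wrt (<) (Js :: nat list)" "i < j" "j < length Js"
  shows "Js ! i < Js ! j"
  using assms by (simp add: sorted_wrt_iff_nth_less)

lemma cyc_facts:
  fixes lo hi :: nat
  assumes fin: "finite A" "finite B" and ne: "A \<union> B \<noteq> {}" and dis: "A \<inter> B = {}"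
    and rng: "A \<union> B \<subseteq> {lo<..<hi}"
  defines "L \<equiv> lo # sorted_list_of_set A @ hi # rev (sorted_list_of_set B)"
  shows "distinct L" "3 \<le> length L" "set L = {lo, hi} \<union> A \<union> B" "set L \<subseteq> {lo..hi}"
    "pe (lo # sorted_list_of_set A @ [hi]) \<subseteq> ce L"
    "pe (lo # sorted_list_of_set B @ [hi]) \<subseteq> ce L"
proof -
  have lohi: "lo < hi" using ne rng by auto
  show "distinct L" unfolding L_def using fin dis rng lohi by auto
  have "card A + card B \<ge> 1" using ne fin by (metis Un_empty card_0_eq add_is_0 less_one not_le)
  then show "3 \<le> length L" unfolding L_def using fin by simp
  show sL: "set L = {lo, hi} \<union> A \<union> B" unfolding L_def using fin by auto
  show "set L \<subseteq> {lo..hi}" using sL rng lohi by auto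
  define P where "P = lo # sorted_list_of_set A"
  define Q where "Q = hi # rev (sorted_list_of_set B)"
  have LPQ: "L = P @ Q" unfolding L_def P_def Q_def by simp
  have PQ: "P \<noteq> []" "Q \<noteq> []" "hd P = lo" "hd Q = hi" unfolding P_def Q_def by auto
  show "pe (lo # sorted_list_of_set A @ [hi]) \<subseteq> ce L"
    using pe_left_ce[OF PQ(1,2)] PQ LPQ unfolding P_def by simp
  have "pe (lo # sorted_list_of_set B @ [hi]) = pe (rev (lo # sorted_list_of_set B @ [hi]))"
    by (simp only: pe_rev)
  also have "rev (lo # sorted_list_of_set B @ [hi]) = Q @ [hd P]" unfolding Q_def P_def by simp
  finally show "pe (lo # sorted_list_of_set B @ [hi]) \<subseteq> ce L"
    using pe_right_ce[OF PQ(1,2)] LPQ by simp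
qed

lemma chain_from_blocks:
  fixes Js :: "nat list" and A B :: "nat \<Rightarrow> nat set"
  assumes s: "sorted_wrt (<) Js" and len: "2 \<le> length Js"
    and blk: "\<And>k. k < length Js - 1 \<Longrightarrow> finite (A k) \<and> finite (B k) \<and> A k \<union> B k \<noteq> {} \<and> A k \<inter> B k = {}
                  \<and> A k \<union> B k \<subseteq> {Js ! k <..< Js ! Suc k}"
  defines "cyc \<equiv> \<lambda>k. Js ! k # sorted_list_of_set (A k) @ Js ! Suc k # rev (sorted_list_of_set (B k))"
  shows "chain_of_cycles (\<Union>j\<in>{1..length Js - 1}. set (cyc (j - 1))) (\<Union>j\<in>{1..length Js - 1}. ce (cyc (j - 1)))"
proof -
  define n where "n = length Js - 1"
  have n1: "1 \<le> n" using len n_def by simp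
  have cf: "distinct (cyc k) \<and> 3 \<le> length (cyc k) \<and> set (cyc k) = {Js ! k, Js ! Suc k} \<union> A k \<union> B k
            \<and> set (cyc k) \<subseteq> {Js ! k .. Js ! Suc k}" if "k < n" for k
    using cyc_facts(1-4)[of "A k" "B k" "Js ! k" "Js ! Suc k"] blk[of k] that unfolding cyc_def n_def by auto
  have isc: "is_cycle (set (cyc k)) (ce (cyc k))" if "k < n" for k
    unfolding is_cycle_def ce_def using cf[OF that] by blast
  have lt: "Js ! i < Js ! j" if "i < j" "j \<le> n" for i j using sorted_nth_less[OF s, of i j] that n_def len by simp
  show ?thesis unfolding chain_of_cycles_def
  proof (rule exI[of _ n], rule exI[of _ "\<lambda>j. set (cyc (j - 1))"], rule exI[of _ "\<lambda>j. ce (cyc (j - 1))"],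
      rule exI[of _ "\<lambda>j. Js ! (j - 1)"], rule exI[of _ "\<lambda>j. Js ! j"], intro conjI ballI impI)
    show "1 \<le> n" by fact
  next
    fix j assume j: "j \<in> {1..n}"
    then have "j - 1 < n" by auto
    then show "is_cycle (set (cyc (j - 1))) (ce (cyc (j - 1)))" using isc by simp
    have "Suc (j - 1) = j" using j by auto
    then show "Js ! j \<in> set (cyc (j - 1))" using cf[OF \<open>j - 1 < n\<close>] by auto
    show "Js ! (j - 1) \<in> set (cyc (j - 1))" using cf \<open>j - 1 < n\<close> by auto
  next
    fix i j assume ij: "i \<in> {1..n}" "j \<in> {1..n}" "i + 1 < j \<or> j + 1 < i"
    have sub: "set (cyc (k - 1)) \<subseteq> {Js ! (k - 1) .. Js ! k}" if "k \<in> {1..n}" for k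
    proof -
      have "k - 1 < n" "Suc (k - 1) = k" using that by auto
      then have "set (cyc (k - 1)) \<subseteq> {Js ! (k - 1) .. Js ! (Suc (k - 1))}" using cf[of "k - 1"] by blast
      then show ?thesis using \<open>Suc (k - 1) = k\<close> by metis
    qed
    from ij(3) show "set (cyc (i - 1)) \<inter> set (cyc (j - 1)) = {}"
    proof
      assume "i + 1 < j"
      then have "Js ! i < Js ! (j - 1)" using lt ij by auto
      then show ?thesis using sub[OF ij(1)] sub[OF ij(2)] by fastforce
    next
      assume "j + 1 < i"
      then have "Js ! j < Js ! (i - 1)" using lt ij by auto
      then show ?thesis using sub[OF ij(1)] sub[OF ij(2)] by fastforce
    qed
  next
    fix j assume j: "j \<in> {2..n}"
    have a1: "j - 1 - 1 < n" "Suc (j - 1 - 1) = j - 1" "j - 1 < n" "Suc (j - 1) = j" using j by auto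
    have s1: "set (cyc (j - 1 - 1)) \<subseteq> {Js ! (j - 1 - 1) .. Js ! (j - 1)}" "Js ! (j - 1) \<in> set (cyc (j - 1 - 1))"
      using cf[OF a1(1)] a1(2) by auto
    have s2: "set (cyc (j - 1)) \<subseteq> {Js ! (j - 1) .. Js ! j}" "Js ! (j - 1) \<in> set (cyc (j - 1))"
      using cf[OF a1(3)] a1(4) by auto
    have "set (cyc (j - 1 - 1)) \<inter> set (cyc (j - 1)) = {Js ! (j - 1)}" using s1 s2 by fastforce
    then show "set (cyc (j - 1 - 1)) \<inter> set (cyc (j - 1)) = {Js ! (j - 1)}" by simp
    then show "set (cyc (j - 1 - 1)) \<inter> set (cyc (j - 1)) = {Js ! (j - 1)}" by simp
  qed (simp_all add: n_def)
qed



lemma sl_le: assumes "sorted_wrt (<) (xs :: nat list)" "i \<le> j" "j < length xs" shows "xs ! i \<le> xs ! j"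
  using assms by (cases "i = j") (auto simp: sorted_wrt_iff_nth_less less_imp_le)

lemma sl_first_last:
  assumes s: "sorted_wrt (<) (xs :: nat list)" and x: "x \<in> set xs"
  shows "xs ! 0 \<le> x" "x \<le> xs ! (length xs - 1)"
proof -
  obtain i where i: "i < length xs" "xs ! i = x" using x by (auto simp: in_set_conv_nth)
  show "xs ! 0 \<le> x" using sl_le[OF s, of 0 i] i by simp
  show "x \<le> xs ! (length xs - 1)" using sl_le[OF s, of i "length xs - 1"] i by simp
qed

lemma sl_block:
  assumes s: "sorted_wrt (<) (xs :: nat list)" and ne: "xs \<noteq> []" and w: "xs ! 0 \<le> w" "w < xs ! (length xs - 1)"
  shows "\<exists>k. Suc k < length xs \<and> xs ! k \<le> w \<and> w < xs ! Suc k"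
proof -
  define S where "S = {k. k < length xs \<and> xs ! k \<le> w}"
  have finS: "finite S" unfolding S_def by simp
  have S0: "0 \<in> S" using ne w unfolding S_def by simp
  define k where "k = Max S"
  have kS: "k \<in> S" using finS S0 unfolding k_def by (intro Max_in) auto
  have kmax: "j \<le> k" if "j \<in> S" for j using finS that unfolding k_def by simp
  have "length xs - 1 \<notin> S" using w unfolding S_def by auto
  then have "k \<noteq> length xs - 1" using kS by auto
  moreover have "k < length xs" using kS unfolding S_def by simp
  ultimately have kl: "Suc k < length xs" by linarith
  have "Suc k \<notin> S" using kmax by fastforce
  then have "w < xs ! Suc k" using kl unfolding S_def by auto
  then show ?thesis using kl kS unfolding S_def by auto
qed

lemma sl_between:
  assumes s: "sorted_wrt (<) (xs :: nat list)" and k: "Suc k < length xs" and x: "x \<in> set xs"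
  shows "xs ! k \<le> x \<Longrightarrow> x < xs ! Suc k \<Longrightarrow> x = xs ! k"
    and "xs ! k < x \<Longrightarrow> x \<le> xs ! Suc k \<Longrightarrow> x = xs ! Suc k"
proof -
  obtain i where i: "i < length xs" "xs ! i = x" using x by (auto simp: in_set_conv_nth)
  show "xs ! k \<le> x \<Longrightarrow> x < xs ! Suc k \<Longrightarrow> x = xs ! k"
  proof -
    assume a: "xs ! k \<le> x" "x < xs ! Suc k"
    show "x = xs ! k"
    proof (cases "i \<le> k")
      case True then have "x \<le> xs ! k" using sl_le[OF s True] k i by simp
      then show ?thesis using a by simp
    next
      case False then have "xs ! Suc k \<le> x" using sl_le[OF s, of "Suc k" i] i by simp
      then show ?thesis using a by simp
    qed
  qed
  show "xs ! k < x \<Longrightarrow> x \<le> xs ! Suc k \<Longrightarrow> x = xs ! Suc k"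
  proof -
    assume a: "xs ! k < x" "x \<le> xs ! Suc k"
    show "x = xs ! Suc k"
    proof (cases "i \<le> k")
      case True then have "x \<le> xs ! k" using sl_le[OF s True] k i by simp
      then show ?thesis using a by simp
    next
      case False then have "xs ! Suc k \<le> x" using sl_le[OF s, of "Suc k" i] i by simp
      then show ?thesis using a by simp
    qed
  qed
qed



definition passes :: "('a \<Rightarrow> nat) \<Rightarrow> 'a set \<Rightarrow> 'a \<Rightarrow> bool" where
  "passes h e w \<longleftrightarrow> (\<exists>u v. e = {u,v} \<and> h u < h w \<and> h w < h v)"

lemma construct:
  fixes V :: "'a set" and E :: "'a set set" and h :: "'a \<Rightarrow> nat"
  assumes finV: "finite V" and inj: "inj_on h V"
    and ed: "\<forall>e\<in>E. \<exists>u v. u \<in> V \<and> v \<in> V \<and> e = {u,v} \<and> h u < h v"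
    and ct: "\<forall>t. card (crossing h E t) \<le> 2"
    and one: "\<forall>w\<in>V. \<forall>e1\<in>E. \<forall>e2\<in>E. passes h e1 w \<and> passes h e2 w \<longrightarrow> e1 = e2"
  shows "\<exists>(W::nat set) F. chain_of_cycles W F \<and> iso_to_subgraph V E W F"
proof -
  have finE: "finite E"
  proof -
    have "E \<subseteq> Pow V" using ed by auto
    then show ?thesis using finV by (meson finite_Pow_iff finite_subset)
  qed
  have ed': "\<forall>e\<in>E. \<exists>u v. e = {u,v} \<and> h u < h v" using ed by blast
  obtain lane :: "'a set \<Rightarrow> bool" where lane: "\<forall>e1\<in>E. \<forall>e2\<in>E. conflict h E e1 e2 \<longrightarrow> lane e1 \<noteq> lane e2"
    using lanes[OF finE ed' ct] by blast
  define junc where "junc v \<longleftrightarrow> \<not> (\<exists>e\<in>E. passes h e v)" for v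
  define peo where "peo v = (THE e. e \<in> E \<and> passes h e v)" for v
  define col where "col v \<longleftrightarrow> \<not> lane (peo v)" for v
  have peo: "peo v = e" if "v \<in> V" "e \<in> E" "passes h e v" for v e
    unfolding peo_def using one that by (intro the_equality) auto
  have peo_in: "peo v \<in> E \<and> passes h (peo v) v" if vv: "v \<in> V" "\<not> junc v" for v
  proof -
    obtain e where "e \<in> E" "passes h e v" using vv unfolding junc_def by blast
    then show ?thesis using peo[OF vv(1)] by simp
  qed
  define \<phi> where "\<phi> v = 2 * h v + 2" for v
  define Mx where "Mx = 2 * Max (insert 0 (h ` V)) + 4"
  have \<phi>lt: "\<phi> v < Mx" if "v \<in> V" for v
  proof -
    have "h v \<le> Max (insert 0 (h ` V))" using finV that by simp
    then show ?thesis unfolding \<phi>_def Mx_def by simp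
  qed
  have \<phi>inj: "inj_on \<phi> V" using inj unfolding \<phi>_def by (auto simp: inj_on_def)
  have \<phi>iff: "\<phi> a < \<phi> b \<longleftrightarrow> h a < h b" for a b unfolding \<phi>_def by simp
  define Jset where "Jset = {0, Mx} \<union> \<phi> ` {v\<in>V. junc v}"
  define Intr where "Intr = \<phi> ` {v\<in>V. \<not> junc v}"
  have finJ: "finite Jset" unfolding Jset_def using finV by simp
  have finI: "finite Intr" unfolding Intr_def using finV by simp
  have evJ: "even x" if "x \<in> Jset" for x using that unfolding Jset_def \<phi>_def Mx_def by auto
  have JI: "x \<notin> Jset" if xI: "x \<in> Intr" for x
  proof
    assume xJ: "x \<in> Jset"
    obtain v where v: "v \<in> V" "\<not> junc v" "x = \<phi> v" using xI unfolding Intr_def by auto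
    have "x \<noteq> 0" "x \<noteq> Mx" using v \<phi>lt unfolding \<phi>_def by auto
    then obtain w where "w \<in> V" "junc w" "x = \<phi> w" using xJ unfolding Jset_def by auto
    then show False using v \<phi>inj by (metis inj_onD)
  qed
  define Js where "Js = sorted_list_of_set Jset"
  have sJ: "set Js = Jset" unfolding Js_def using finJ by simp
  have sorJ: "sorted_wrt (<) Js" unfolding Js_def by (rule strict_sorted_list_of_set)
  have Mx0: "0 < Mx" unfolding Mx_def by simp
  have lenJ: "2 \<le> length Js"
  proof -
    have "{0, Mx} \<subseteq> Jset" unfolding Jset_def by auto
    then have "card {0, Mx} \<le> card Jset" using finJ by (intro card_mono)
    moreover have "card {0, Mx} = 2" using Mx0 by simp
    moreover have "length Js = card Jset" unfolding Js_def by simp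
    ultimately show ?thesis by simp
  qed
  define n where "n = length Js - 1"
  have J0: "Js ! 0 = 0"
  proof -
    have "0 \<in> set Js" using sJ unfolding Jset_def by auto
    then have "Js ! 0 \<le> 0" using sl_first_last(1)[OF sorJ] by blast
    then show ?thesis by simp
  qed
  have Jn: "Js ! n = Mx"
  proof -
    have "Mx \<in> set Js" using sJ unfolding Jset_def by auto
    then have "Mx \<le> Js ! n" using sl_first_last(2)[OF sorJ] n_def by blast
    moreover have "n < length Js" using lenJ n_def by simp
    then have "Js ! n \<in> Jset" using sJ nth_mem by blast
    moreover have "x \<le> Mx" if "x \<in> Jset" for x using that \<phi>lt unfolding Jset_def by fastforce
    ultimately show ?thesis by fastforce
  qed
  have blockw: "\<exists>k<n. Js ! k \<le> w \<and> w < Js ! Suc k" if wM: "w < Mx" for w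
  proof -
    have "Js \<noteq> []" using lenJ by auto
    then obtain k where k: "Suc k < length Js" "Js ! k \<le> w" "w < Js ! Suc k"
      using sl_block[OF sorJ, of w] J0 Jn wM n_def by auto
    then have "k < n" using n_def by linarith
    then show ?thesis using k by blast
  qed
  have btw1: "x = Js ! k" if "k < n" "x \<in> Jset" "Js ! k \<le> x" "x < Js ! Suc k" for k x
    using sl_between(1)[OF sorJ, of k x] that sJ n_def by auto
  have btw2: "x = Js ! Suc k" if "k < n" "x \<in> Jset" "Js ! k < x" "x \<le> Js ! Suc k" for k x
    using sl_between(2)[OF sorJ, of k x] that sJ n_def by auto
  have JkJ: "Js ! k \<in> Jset" "Js ! Suc k \<in> Jset" "Js ! k < Js ! Suc k" if "k < n" for k
    using that sJ n_def sorted_nth_less[OF sorJ, of k "Suc k"] by auto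
  define Ik where "Ik k = {w\<in>Intr. Js ! k < w \<and> w < Js ! Suc k}" for k
  define colw where "colw w \<longleftrightarrow> (\<exists>v\<in>V. \<not> junc v \<and> \<phi> v = w \<and> col v)" for w
  define A where "A k = {w\<in>Ik k. colw w} \<union> (if Ik k = {} then {Js ! k + 1} else {})" for k
  define B where "B k = {w\<in>Ik k. \<not> colw w}" for k
  have colw_iff: "colw (\<phi> v) \<longleftrightarrow> col v" if "v \<in> V" "\<not> junc v" for v
    unfolding colw_def using that \<phi>inj by (auto dest: inj_onD)
  have blk: "finite (A k) \<and> finite (B k) \<and> A k \<union> B k \<noteq> {} \<and> A k \<inter> B k = {}
                  \<and> A k \<union> B k \<subseteq> {Js ! k <..< Js ! Suc k}" if kn: "k < length Js - 1" for k
  proof -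
    have k: "k < n" using kn n_def by simp
    have "even (Js ! k)" "even (Js ! Suc k)" using evJ JkJ[OF k] by auto
    then have fil: "Js ! k + 1 < Js ! Suc k" using JkJ(3)[OF k]
      by (metis Suc_eq_plus1 Suc_lessI even_Suc)
    have "finite (Ik k)" using finI unfolding Ik_def by simp
    then show ?thesis unfolding A_def B_def using fil unfolding Ik_def by auto
  qed
  define cyc where "cyc = (\<lambda>k. Js ! k # sorted_list_of_set (A k) @ Js ! Suc k # rev (sorted_list_of_set (B k)))"
  define W where "W = (\<Union>j\<in>{1..length Js - 1}. set (cyc (j - 1)))"
  define F where "F = (\<Union>j\<in>{1..length Js - 1}. ce (cyc (j - 1)))"
  have chain: "chain_of_cycles W F"
    unfolding W_def F_def cyc_def by (rule chain_from_blocks[OF sorJ lenJ blk])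
  have cycf: "set (cyc k) = {Js ! k, Js ! Suc k} \<union> A k \<union> B k"
    "pe (Js ! k # sorted_list_of_set (A k) @ [Js ! Suc k]) \<subseteq> ce (cyc k)"
    "pe (Js ! k # sorted_list_of_set (B k) @ [Js ! Suc k]) \<subseteq> ce (cyc k)" if k: "k < n" for k
    using cyc_facts(3,5,6)[of "A k" "B k" "Js ! k" "Js ! Suc k"] blk[of k] k n_def unfolding cyc_def by auto
  have inW: "set (cyc k) \<subseteq> W" if k: "k < n" for k
  proof -
    have "Suc k \<in> {1..length Js - 1}" using k n_def by simp
    from UN_upper[OF this, of "\<lambda>j. set (cyc (j - 1))"] show ?thesis unfolding W_def by simp
  qed
  have inF: "ce (cyc k) \<subseteq> F" if k: "k < n" for k
  proof -
    have "Suc k \<in> {1..length Js - 1}" using k n_def by simp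
    from UN_upper[OF this, of "\<lambda>j. ce (cyc (j - 1))"] show ?thesis unfolding F_def by simp
  qed
  have vert: "\<phi> v \<in> W" if vV: "v \<in> V" for v
  proof -
    obtain k where k: "k < n" "Js ! k \<le> \<phi> v" "\<phi> v < Js ! Suc k" using blockw \<phi>lt vV by blast
    show ?thesis
    proof (cases "junc v")
      case True
      then have "\<phi> v \<in> Jset" using vV unfolding Jset_def by auto
      then have "\<phi> v = Js ! k" using btw1 k by blast
      then show ?thesis using cycf(1)[OF k(1)] inW[OF k(1)] by auto
    next
      case False
      then have pI: "\<phi> v \<in> Intr" using vV unfolding Intr_def by auto
      then have "\<phi> v \<noteq> Js ! k" using JI JkJ k by metis
      then have "\<phi> v \<in> Ik k" using pI k unfolding Ik_def by auto
      then have "\<phi> v \<in> A k \<union> B k" unfolding A_def B_def by auto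
      then show ?thesis using cycf(1)[OF k(1)] inW[OF k(1)] by auto
    qed
  qed
  have edge: "\<phi> ` e \<in> F" if eE: "e \<in> E" for e
  proof -
    obtain x y where xy: "x \<in> V" "y \<in> V" "e = {x,y}" "h x < h y" using ed eE by blast
    define p where "p = \<phi> x"
    define q where "q = \<phi> y"
    have pq: "p < q" using xy \<phi>iff unfolding p_def q_def by simp
    have img: "\<phi> ` e = {p, q}" using xy unfolding p_def q_def by simp
    obtain k where k: "k < n" "Js ! k \<le> p" "p < Js ! Suc k" using blockw \<phi>lt xy unfolding p_def by blast
    have passm: "passes h e v" if "v \<in> V" "p < \<phi> v" "\<phi> v < q" for v
      using that xy \<phi>iff unfolding passes_def p_def q_def by blast
    have qle: "q \<le> Js ! Suc k"
    proof (rule ccontr)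
      assume "\<not> q \<le> Js ! Suc k"
      then have lt: "Js ! Suc k < q" by simp
      have "Js ! Suc k \<noteq> 0" using k by simp
      moreover have "Js ! Suc k \<noteq> Mx" using lt \<phi>lt xy unfolding q_def by fastforce
      ultimately obtain v where v: "v \<in> V" "junc v" "Js ! Suc k = \<phi> v" using JkJ(2)[OF k(1)] unfolding Jset_def by auto
      then have "passes h e v" using passm lt k by simp
      then show False using v eE unfolding junc_def by blast
    qed
    have cross_e: "e \<in> crossing h E t" if "h x \<le> t" "t < h y" for t
      using that xy eE unfolding crossing_def by blast
    have notin: "x' \<notin> e'" if "passes h e' x'" "x' \<in> V" for e' x'
      using that unfolding passes_def by auto
    have lx: "col x = lane e" if nj: "\<not> junc x"
    proof -
      have e': "peo x \<in> E" "passes h (peo x) x" using peo_in xy nj by auto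
      then obtain u v where uv: "peo x = {u,v}" "h u < h x" "h x < h v" unfolding passes_def by blast
      have "peo x \<in> crossing h E (h x)" using uv e' unfolding crossing_def by fastforce
      moreover have "e \<in> crossing h E (h x)" using cross_e xy by simp
      moreover have "e \<noteq> peo x" using notin[OF e'(2) xy(1)] xy by auto
      ultimately have "conflict h E e (peo x)" unfolding conflict_def by blast
      then have "lane e \<noteq> lane (peo x)" using lane eE e' by blast
      then show ?thesis unfolding col_def by simp
    qed
    have ly: "col y = lane e" if nj: "\<not> junc y"
    proof -
      have e': "peo y \<in> E" "passes h (peo y) y" using peo_in xy nj by auto
      then obtain u v where uv: "peo y = {u,v}" "h u < h y" "h y < h v" unfolding passes_def by blast
      have "peo y \<in> crossing h E (h y - 1)" using uv e' unfolding crossing_def by fastforce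
      moreover have "e \<in> crossing h E (h y - 1)" using cross_e xy by simp
      moreover have "e \<noteq> peo y" using notin[OF e'(2) xy(2)] xy by auto
      ultimately have "conflict h E e (peo y)" unfolding conflict_def by blast
      then have "lane e \<noteq> lane (peo y)" using lane eE e' by blast
      then show ?thesis unfolding col_def by simp
    qed
    have mid: "col v \<noteq> lane e" if "v \<in> V" "p < \<phi> v" "\<phi> v < q" for v
    proof -
      have "passes h e v" using passm that by blast
      then have "peo v = e" using peo that eE by blast
      then show ?thesis unfolding col_def by simp
    qed
    have pcase: "p = Js ! k \<or> (p \<in> Ik k \<and> colw p = lane e)"
    proof (cases "junc x")
      case True
      then have "p \<in> Jset" using xy unfolding Jset_def p_def by auto
      then show ?thesis using btw1 k by blast
    next
      case False
      then have pI: "p \<in> Intr" using xy unfolding Intr_def p_def by auto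
      then have "p \<noteq> Js ! k" using JI JkJ k by metis
      then have "p \<in> Ik k" using pI k unfolding Ik_def by auto
      moreover have "colw p = lane e" using colw_iff[OF xy(1) False] lx[OF False] unfolding p_def by simp
      ultimately show ?thesis by simp
    qed
    have qcase: "q = Js ! Suc k \<or> (q \<in> Ik k \<and> colw q = lane e)"
    proof (cases "junc y")
      case True
      then have "q \<in> Jset" using xy unfolding Jset_def q_def by auto
      then show ?thesis using btw2[OF k(1)] k qle pq by simp
    next
      case False
      then have qI: "q \<in> Intr" using xy unfolding Intr_def q_def by auto
      then have "q \<noteq> Js ! Suc k" using JI JkJ k by metis
      then have "q \<in> Ik k" using qI k qle pq unfolding Ik_def by auto
      moreover have "colw q = lane e" using colw_iff[OF xy(2) False] ly[OF False] unfolding q_def by simp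
      ultimately show ?thesis by simp
    qed
    have finIk: "finite (Ik k)" using finI unfolding Ik_def by simp
    show ?thesis
    proof (cases "Ik k = {}")
      case True
      then have "p = Js ! k" "q = Js ! Suc k" using pcase qcase by auto
      moreover have "B k = {}" using True unfolding B_def by simp
      then have "cyc k = (Js ! k # sorted_list_of_set (A k)) @ [Js ! Suc k]" unfolding cyc_def by simp
      then have "{Js ! Suc k, Js ! k} \<in> ce (cyc k)" using end_in_ce[of "Js ! k # sorted_list_of_set (A k)" "[Js ! Suc k]"]
        by simp
      ultimately show ?thesis using img inF[OF k(1)] by (auto simp: insert_commute)
    next
      case False
      define S where "S = {w\<in>Ik k. colw w = lane e}"
      define path where "path = Js ! k # sorted_list_of_set S @ [Js ! Suc k]"
      have finS: "finite S" using finIk unfolding S_def by simp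
      have Srng: "S \<subseteq> {Js ! k <..< Js ! Suc k}" unfolding S_def Ik_def by auto
      have ppe: "pe path \<subseteq> ce (cyc k)"
      proof (cases "lane e")
        case True
        then have "S = A k" unfolding S_def A_def using False by auto
        then show ?thesis using cycf(2)[OF k(1)] unfolding path_def by simp
      next
        case False
        then have "S = B k" unfolding S_def B_def by auto
        then show ?thesis using cycf(3)[OF k(1)] unfolding path_def by simp
      qed
      have spath: "set path = {Js ! k, Js ! Suc k} \<union> S" unfolding path_def using finS by auto
      have sorp: "sorted_wrt (<) path"
        unfolding path_def using finS Srng JkJ(3)[OF k(1)]
        by (auto simp: sorted_wrt_append strict_sorted_list_of_set)
      have pin: "p \<in> set path" using pcase spath unfolding S_def by auto
      have qin: "q \<in> set path" using qcase spath unfolding S_def by auto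
      have none: "\<forall>w\<in>set path. \<not> (p < w \<and> w < q)"
      proof (intro ballI notI)
        fix w assume w: "w \<in> set path" "p < w \<and> w < q"
        then have "w \<in> S" using spath k qle by auto
        then have wI: "w \<in> Intr" "colw w = lane e" unfolding S_def Ik_def by auto
        then obtain v where v: "v \<in> V" "\<not> junc v" "w = \<phi> v" unfolding Intr_def by auto
        then have "col v = lane e" using wI colw_iff by simp
        moreover have "col v \<noteq> lane e" using mid v w by blast
        ultimately show False by simp
      qed
      have "{p, q} \<in> pe path" using consec_pe[OF sorp pin qin pq none] .
      then show ?thesis using img ppe inF[OF k(1)] by auto
    qed
  qed
  have "iso_to_subgraph V E W F" unfolding iso_to_subgraph_def
    using \<phi>inj vert edge by blast
  then show ?thesis using chain by blast
qed



lemma forward: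
  fixes V :: "'a set" and E :: "'a set set"
  assumes sg: "simple_graph V E" and cw: "cutwidth_at_most_2 V E"
  shows "\<exists>(W :: nat set) F. chain_of_cycles W F \<and> iso_to_subgraph V E W F"
proof -
  have finV: "finite V" and sgE: "\<forall>e\<in>E. e \<subseteq> V \<and> card e = 2" using sg unfolding simple_graph_def by auto
  obtain f where bij: "bij_betw f V {1..card V}"
    and cut: "\<forall>i\<in>{1..<card V}. card {e\<in>E. \<exists>u v. e = {u, v} \<and> f u \<le> i \<and> i < f v} \<le> 2"
    using cw unfolding cutwidth_at_most_2_def by blast
  have injf: "inj_on f V" using bij by (rule bij_betw_imp_inj_on)
  have frng: "1 \<le> f v" "f v \<le> card V" if "v \<in> V" for v
    using bij that unfolding bij_betw_def by auto
  define iso where "iso v \<longleftrightarrow> \<not> (\<exists>e\<in>E. v \<in> e)" for v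
  define h where "h v = (if iso v then card V + f v else f v)" for v
  have hf: "h v = f v" if "e \<in> E" "v \<in> e" for e v using that unfolding h_def iso_def by auto
  have inj: "inj_on h V"
  proof (rule inj_onI)
    fix a b assume ab: "a \<in> V" "b \<in> V" "h a = h b"
    show "a = b"
    proof (cases "iso a"; cases "iso b")
      assume "iso a" "iso b" then show ?thesis using ab injf unfolding h_def by (auto dest: inj_onD)
    next
      assume "\<not> iso a" "\<not> iso b" then show ?thesis using ab injf unfolding h_def by (auto dest: inj_onD)
    next
      assume "iso a" "\<not> iso b" then show ?thesis using ab frng[of a] frng[of b] unfolding h_def by auto
    next
      assume "\<not> iso a" "iso b" then show ?thesis using ab frng[of a] frng[of b] unfolding h_def by auto
    qed
  qed
  have ed: "\<forall>e\<in>E. \<exists>u v. u \<in> V \<and> v \<in> V \<and> e = {u,v} \<and> h u < h v"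
  proof
    fix e assume eE: "e \<in> E"
    then obtain u v where uv: "e = {u,v}" "u \<noteq> v" using sgE by (meson card_2_iff)
    then have V: "u \<in> V" "v \<in> V" using sgE eE by auto
    then have "h u \<noteq> h v" using inj uv by (auto dest: inj_onD)
    then have "h u < h v \<or> h v < h u" by auto
    then show "\<exists>u v. u \<in> V \<and> v \<in> V \<and> e = {u,v} \<and> h u < h v" using uv V by (metis insert_commute)
  qed
  have ct: "\<forall>t. card (crossing h E t) \<le> 2"
  proof
    fix t
    have eq: "crossing h E t = {e\<in>E. \<exists>u v. e = {u, v} \<and> f u \<le> t \<and> t < f v}"
      unfolding crossing_def using hf by (auto; metis insertI1 insert_commute hf)
    show "card (crossing h E t) \<le> 2"
    proof (cases "t \<in> {1..<card V}")
      case True then show ?thesis using eq cut by simp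
    next
      case False
      have "{e\<in>E. \<exists>u v. e = {u, v} \<and> f u \<le> t \<and> t < f v} = {}"
      proof (rule ccontr)
        assume "{e\<in>E. \<exists>u v. e = {u, v} \<and> f u \<le> t \<and> t < f v} \<noteq> {}"
        then obtain e u v where e: "e \<in> E" "e = {u,v}" "f u \<le> t" "t < f v" by blast
        then have "u \<in> V" "v \<in> V" using sgE by auto
        then show False using frng e False by fastforce
      qed
      then have "card (crossing h E t) = 0" using eq by (metis card.empty)
      then show ?thesis by simp
    qed
  qed
  have finE: "finite E"
  proof -
    have "E \<subseteq> Pow V" using sgE by auto
    then show ?thesis using finV by (meson finite_Pow_iff finite_subset)
  qed
  have one: "\<forall>w\<in>V. \<forall>e1\<in>E. \<forall>e2\<in>E. passes h e1 w \<and> passes h e2 w \<longrightarrow> e1 = e2"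
  proof (intro ballI impI, rule ccontr)
    fix w e1 e2 assume w: "w \<in> V" and e: "e1 \<in> E" "e2 \<in> E" and p: "passes h e1 w \<and> passes h e2 w" and ne: "e1 \<noteq> e2"
    obtain u1 v1 where uv1: "e1 = {u1,v1}" "h u1 < h w" "h w < h v1" using p unfolding passes_def by blast
    obtain u2 v2 where uv2: "e2 = {u2,v2}" "h u2 < h w" "h w < h v2" using p unfolding passes_def by blast
    have "\<not> iso w"
    proof
      assume "iso w"
      then have "h w = card V + f w" unfolding h_def by simp
      moreover have "h v1 = f v1" using hf e uv1 by auto
      moreover have "v1 \<in> V" using sgE e uv1 by auto
      ultimately show False using uv1 frng[of v1] frng[of w] w by simp
    qed
    then obtain e0 where e0: "e0 \<in> E" "w \<in> e0" unfolding iso_def by blast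
    then obtain z where z: "e0 = {w, z}" "z \<noteq> w" using sgE by (metis card_2_iff insert_commute insertE singletonD)
    have zV: "z \<in> V" using sgE e0 z by auto
    have w1: "w \<notin> e1" "w \<notin> e2" using uv1 uv2 by auto
    obtain t where t: "e0 \<in> crossing h E t" "e1 \<in> crossing h E t" "e2 \<in> crossing h E t"
    proof (cases "h w < h z")
      case True
      have "e0 \<in> crossing h E (h w)" using e0 z True unfolding crossing_def by blast
      moreover have "e1 \<in> crossing h E (h w)" using e uv1 unfolding crossing_def by fastforce
      moreover have "e2 \<in> crossing h E (h w)" using e uv2 unfolding crossing_def by fastforce
      ultimately show ?thesis using that by blast
    next
      case False
      then have "h z < h w" using inj zV w z by (metis inj_onD linorder_neqE_nat)
      then have "e0 \<in> crossing h E (h w - 1)" using e0 z unfolding crossing_def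
        by (intro CollectI conjI exI[of _ z] exI[of _ w]) (auto simp: insert_commute)
      moreover have "e1 \<in> crossing h E (h w - 1)" using e uv1 unfolding crossing_def by fastforce
      moreover have "e2 \<in> crossing h E (h w - 1)" using e uv2 unfolding crossing_def by fastforce
      ultimately show ?thesis using that by blast
    qed
    have sub3: "{e0, e1, e2} \<subseteq> crossing h E t" using t by auto
    have "e0 \<noteq> e1" "e0 \<noteq> e2" using w1 e0 by auto
    then have c3: "card {e0, e1, e2} = 3" using ne by simp
    have "finite (crossing h E t)" using finE unfolding crossing_def by simp
    then have "card {e0, e1, e2} \<le> card (crossing h E t)" using card_mono sub3 by blast
    moreover have "card (crossing h E t) \<le> 2" using ct by blast
    ultimately show False using c3 by linarith
  qed
  show ?thesis using construct[OF finV inj ed ct one] .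
qed

lemma backward:
  fixes V :: "'a set" and E :: "'a set set" and W :: "nat set"
  assumes sg: "simple_graph V E" and ch: "chain_of_cycles W F" and iso: "iso_to_subgraph V E W F"
  shows "cutwidth_at_most_2 V E"
proof -
  have finV: "finite V" and sub: "\<forall>e\<in>E. e \<subseteq> V" using sg unfolding simple_graph_def by auto
  obtain H where H: "cw2h H W F" using chain_cw[OF ch] by blast
  obtain g where g: "inj_on g V" "g ` V \<subseteq> W" "\<forall>e\<in>E. g ` e \<in> F" using iso unfolding iso_to_subgraph_def by blast
  have "cw2h (H \<circ> g) V E" using compose_lemma[OF H g sub finV] .
  then show ?thesis using rank_lemma[OF finV _ sub] by blast
qed

theorem mainTheorem1:
  fixes V :: "'a set" and E :: "'a set set"
  assumes "simple_graph V E"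
  shows "cutwidth_at_most_2 V E \<longleftrightarrow>
    (\<exists>(W :: nat set) F. chain_of_cycles W F \<and> iso_to_subgraph V E W F)"
  using forward[OF assms] backward[OF assms] by blast

end
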